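(* Let $H=(V,E)$ be a finite hypergraph with vertices $V=\{v_1,\dots,v_n\}$ and hyperedges $E=\{e_1,\dots,e_m\}$, and let $\Omega$ be the nilpotent adjacency matrix of $H$ (defined in the context). Let $k\in\mathbb{N}$, $k\ge 1$. (1) For $1\le i\ne j\le n$, $$\zeta_i\,(\Omega^k)_{ij}=\sum_{\substack{I\subseteq [n]\\ |I|=k+1}}\ \sum_{J\subseteq[m]}\omega_{I,J}\,\zeta_I\,\varepsilon_J,$$ where $\omega_{I,J}$ is the number of $k$-paths from $v_i$ to $v_j$ in $H$ whose vertex set is $\{v_t: t\in I\}$ and whose set of hyperedges is $\{e_\ell:\ell\in J\}$. (2) For $1\le i\le n$ and $k\ge 2$, $$(\Omega^k)_{ii}=\sum_{\substack{I\subseteq [n]\\ |I|=k}}\ \sum_{J\subseteq[m]}\omega_{I,J}\,\zeta_I\,\varepsilon_J,$$ where $\omega_{I,J}$ is the number of $k$-cycles in $H$ based at $v_i$ whose vertex set is $\{v_t: t\in I\}$ and whose set of hyperedges is $\{e_\ell:\ell\in J\}$.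
   Context: Algebras: $\mathfrak{Z}_n$ (the $n$-particle zeon algebra) is the commutative real algebra with unit generated by $\zeta_1,\dots,\zeta_n$ subject to $\zeta_i\zeta_j=\zeta_j\zeta_i$ and $\zeta_i^2=0$; for $I\subseteq[n]$, $\zeta_I=\prod_{i\in I}\zeta_i$ ($\zeta_\emptyset=1$), and $\{\zeta_I: I\subseteq[n]\}$ is a basis. $\mathfrak{I}_m$ (the idem-Clifford algebra) is the commutative real algebra with unit generated by $\varepsilon_1,\dots,\varepsilon_m$ subject to $\varepsilon_i\varepsilon_j=\varepsilon_j\varepsilon_i$ and $\varepsilon_i^2=\varepsilon_i$; $\varepsilon_J=\prod_{\ell\in J}\varepsilon_\ell$, and $\{\varepsilon_J\}$ is a basis. Computations take place in the commutative algebra $\mathfrak{Z}_n\otimes\mathfrak{I}_m$, with basis $\{\zeta_I\varepsilon_J\}$. Hypergraph: a hypergraph $H=(V,E)$ is a finite set $V$ with a set $E$ of nonempty subsets of $V$ (hyperedges). Its incidence matrix $C$ is the $n\times m$ matrix with $C_{i\ell}=1$ if $v_i\in e_\ell$ and $0$ otherwise. The nilpotent adjacency matrix of $H$ is $\Omega=XZ$, where $X=C\,\mathrm{diag}(\varepsilon_1,\dots,\varepsilon_m)$ ($n\times m$) and $Z=C^T\mathrm{diag}(\zeta_1,\dots,\zeta_n)$ ($m\times n$); explicitly, for all $i,j$ (including $i=j$), $\Omega_{ij}=\zeta_j\sum_{\ell:\ v_i\in e_\ell,\ v_j\in e_\ell}\varepsilon_\ell$. Walks: a $k$-walk in $H$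 is a sequence $(u_0,f_1,u_1,\dots,f_k,u_k)$ with $u_t\in V$, $f_t\in E$ and $u_{t-1},u_t\in f_t$ for $1\le t\le k$; its vertex set is $\{u_0,\dots,u_k\}$ and its hyperedge set is $\{f_1,\dots,f_k\}$. A $k$-path from $v_i$ to $v_j$ is a $k$-walk with $u_0=v_i$, $u_k=v_j$ and $u_0,\dots,u_k$ pairwise distinct. A $k$-cycle based at $v_i$ is a $k$-walk with $u_0=u_k=v_i$ and $u_0,\dots,u_{k-1}$ pairwise distinct (its vertex set is $\{u_0,\dots,u_{k-1}\}$). *)

theory Defs
  imports Complex_Main
begin

text \<open>Elements of the commutative algebra Z_n (x) I_m are represented by their
coordinates with respect to the basis zeta_I eps_J: an element is the function
sending (I, J) to the coefficient of zeta_I eps_J.  Zeon generators are indexed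
by 1..n, idempotent generators by 1..m.\<close>

type_synonym zi = "nat set \<Rightarrow> nat set \<Rightarrow> real"

definition zzero :: zi where "zzero = (\<lambda>I J. 0)"

definition zadd :: "zi \<Rightarrow> zi \<Rightarrow> zi" where
  "zadd a b = (\<lambda>I J. a I J + b I J)"

definition zscal :: "real \<Rightarrow> zi \<Rightarrow> zi" where
  "zscal c a = (\<lambda>I J. c * a I J)"

definition zsum :: "('x \<Rightarrow> zi) \<Rightarrow> 'x set \<Rightarrow> zi" where
  "zsum f S = (\<lambda>I J. \<Sum>x\<in>S. f x I J)"

definition zbasis :: "nat set \<Rightarrow> nat set \<Rightarrow> zi" where
  "zbasis I0 J0 = (\<lambda>I J. if I = I0 \<and> J = J0 then 1 else 0)"

definition zone :: zi where "zone = zbasis {} {}"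

definition zeta :: "nat \<Rightarrow> zi" where "zeta i = zbasis {i} {}"

definition eps :: "nat \<Rightarrow> zi" where "eps l = zbasis {} {l}"

text \<open>Multiplication: zeta_I1 zeta_I2 = zeta_(I1 \<union> I2) if I1, I2 disjoint and 0 otherwise;
eps_J1 eps_J2 = eps_(J1 \<union> J2).\<close>
definition zmul :: "zi \<Rightarrow> zi \<Rightarrow> zi" where
  "zmul a b = (\<lambda>I J. \<Sum>I1\<in>Pow I. \<Sum>J1\<in>Pow J. \<Sum>J2\<in>Pow J.
       if J1 \<union> J2 = J then a I1 J1 * b (I - I1) J2 else 0)"

definition mmul :: "nat \<Rightarrow> (nat \<Rightarrow> nat \<Rightarrow> zi) \<Rightarrow> (nat \<Rightarrow> nat \<Rightarrow> zi) \<Rightarrow> (nat \<Rightarrow> nat \<Rightarrow> zi)" where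
  "mmul n A B = (\<lambda>i j. zsum (\<lambda>t. zmul (A i t) (B t j)) {1..n})"

definition mid :: "nat \<Rightarrow> nat \<Rightarrow> zi" where
  "mid = (\<lambda>i j. if i = j then zone else zzero)"

fun mpow :: "nat \<Rightarrow> (nat \<Rightarrow> nat \<Rightarrow> zi) \<Rightarrow> nat \<Rightarrow> (nat \<Rightarrow> nat \<Rightarrow> zi)" where
  "mpow n A 0 = mid"
| "mpow n A (Suc k) = mmul n (mpow n A k) A"

text \<open>Hypergraph with vertices v_1..v_n (identified with 1..n) and hyperedges
e_1..e_m given by e :: nat \<Rightarrow> nat set.\<close>
definition nilp_adj :: "nat \<Rightarrow> (nat \<Rightarrow> nat set) \<Rightarrow> nat \<Rightarrow> nat \<Rightarrow> zi" where
  "nilp_adj m e = (\<lambda>i j. zmul (zeta j) (zsum eps {l\<in>{1..m}. i \<in> e l \<and> j \<in> e l}))"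

definition hypergraph :: "nat \<Rightarrow> nat \<Rightarrow> (nat \<Rightarrow> nat set) \<Rightarrow> bool" where
  "hypergraph n m e \<longleftrightarrow> (\<forall>l\<in>{1..m}. e l \<noteq> {} \<and> e l \<subseteq> {1..n}) \<and> inj_on e {1..m}"

text \<open>A k-walk (u_0, f_1, u_1, ..., f_k, u_k): us = [u_0..u_k] (vertex indices),
fs = [f_1..f_k] (hyperedge indices).\<close>
definition is_walk :: "nat \<Rightarrow> nat \<Rightarrow> (nat \<Rightarrow> nat set) \<Rightarrow> nat \<Rightarrow> nat list \<Rightarrow> nat list \<Rightarrow> bool" where
  "is_walk n m e k us fs \<longleftrightarrow> length us = k + 1 \<and> length fs = k \<and>
     set us \<subseteq> {1..n} \<and> set fs \<subseteq> {1..m} \<and>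
     (\<forall>t<k. us ! t \<in> e (fs ! t) \<and> us ! (t+1) \<in> e (fs ! t))"

definition is_path :: "nat \<Rightarrow> nat \<Rightarrow> (nat \<Rightarrow> nat set) \<Rightarrow> nat \<Rightarrow> nat \<Rightarrow> nat \<Rightarrow> nat list \<Rightarrow> nat list \<Rightarrow> bool" where
  "is_path n m e k i j us fs \<longleftrightarrow> is_walk n m e k us fs \<and> us ! 0 = i \<and> us ! k = j \<and> distinct us"

definition is_cycle :: "nat \<Rightarrow> nat \<Rightarrow> (nat \<Rightarrow> nat set) \<Rightarrow> nat \<Rightarrow> nat \<Rightarrow> nat list \<Rightarrow> nat list \<Rightarrow> bool" where
  "is_cycle n m e k i us fs \<longleftrightarrow> is_walk n m e k us fs \<and> us ! 0 = i \<and> us ! k = i \<and> distinct (take k us)"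

definition path_count :: "nat \<Rightarrow> nat \<Rightarrow> (nat \<Rightarrow> nat set) \<Rightarrow> nat \<Rightarrow> nat \<Rightarrow> nat \<Rightarrow> nat set \<Rightarrow> nat set \<Rightarrow> nat" where
  "path_count n m e k i j I J = card {(us, fs). is_path n m e k i j us fs \<and> set us = I \<and> set fs = J}"

definition cycle_count :: "nat \<Rightarrow> nat \<Rightarrow> (nat \<Rightarrow> nat set) \<Rightarrow> nat \<Rightarrow> nat \<Rightarrow> nat set \<Rightarrow> nat set \<Rightarrow> nat" where
  "cycle_count n m e k i I J = card {(us, fs). is_cycle n m e k i us fs \<and> set (take k us) = I \<and> set fs = J}"

end

theory Submission
  imports Defs
begin

lemma zsum_basis_coef:
  assumes "finite A"
  shows "zsum (\<lambda>(I, J). zscal (c I J) (zbasis I J)) A I0 J0 = (if (I0, J0) \<in> A then c I0 J0 else 0)"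
proof -
  have "\<forall>x\<in>A. (case x of (I, J) \<Rightarrow> zscal (c I J) (zbasis I J)) I0 J0 = (if (I0,J0) = x then c I0 J0 else 0)"
    by (clarsimp simp: zscal_def zbasis_def)
  then show ?thesis unfolding zsum_def using assms by (simp add: sum.delta)
qed

lemma zmul_zeta_left:
  assumes "finite I" "finite J" shows "zmul (zbasis {j} {}) b I J = (if j \<in> I then b (I - {j}) J else 0)"
proof -
  have fin: "finite (Pow J)" "finite (Pow I)" using assms by auto
  have "zmul (zbasis {j} {}) b I J = (\<Sum>I1\<in>Pow I. if I1 = {j} then (\<Sum>J1\<in>Pow J. \<Sum>J2\<in>Pow J.
       if J1 \<union> J2 = J then (if J1 = {} then 1 else 0) * b (I - I1) J2 else 0) else 0)"
    unfolding zmul_def zbasis_def by (intro sum.cong refl) (simp cong: if_cong)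
  also have "\<dots> = (if j \<in> I then (\<Sum>J1\<in>Pow J. \<Sum>J2\<in>Pow J.
       if J1 \<union> J2 = J then (if J1 = {} then 1 else 0) * b (I - {j}) J2 else 0) else 0)"
    using fin by (simp add: sum.delta')
  also have "(\<Sum>J1\<in>Pow J. \<Sum>J2\<in>Pow J.
       if J1 \<union> J2 = J then (if J1 = {} then 1 else 0) * b (I - {j}) J2 else 0)
     = (\<Sum>J1\<in>Pow J. if J1 = {} then (\<Sum>J2\<in>Pow J. if J = J2 then b (I - {j}) J2 else 0) else 0)"
  proof (intro sum.cong refl)
    fix J1 assume "J1 \<in> Pow J"
    show "(\<Sum>J2\<in>Pow J. if J1 \<union> J2 = J then (if J1 = {} then 1 else 0) * b (I - {j}) J2 else 0)
      = (if J1 = {} then (\<Sum>J2\<in>Pow J. if J = J2 then b (I - {j}) J2 else 0) else 0)"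
      by (cases "J1 = {}") (simp_all add: if_distrib cong: if_cong, auto intro!: sum.cong)
  qed
  also have "\<dots> = b (I - {j}) J" using fin by (simp add: sum.delta)
  finally show ?thesis .
qed

lemma zmul_right_adj:
  assumes finS: "finite S" and fI: "finite I" and fJ: "finite J"
    and bdef: "\<And>I' J'. b I' J' = (if I' = {j} \<and> (\<exists>l\<in>S. J' = {l}) then 1 else 0)"
  shows "zmul a b I J = (if j \<in> I then (\<Sum>J1\<in>Pow J.
           real (card {l\<in>S. l \<in> J \<and> J1 \<union> {l} = J}) * a (I - {j}) J1) else 0)"
proof -
  have fin: "finite (Pow J)" "finite (Pow I)" using assms by auto
  have A: "(\<Sum>J2\<in>Pow J. if J1 \<union> J2 = J then a I1 J1 * b (I - I1) J2 else 0)
        = (if I - I1 = {j} then real (card {l\<in>S. l \<in> J \<and> J1 \<union> {l} = J}) * a I1 J1 else 0)"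
    if "J1 \<subseteq> J" for I1 J1
  proof (cases "I - I1 = {j}")
    case False then show ?thesis by (intro trans[OF sum.neutral]) (auto simp: bdef)
  next
    case True
    have "(\<Sum>J2\<in>Pow J. if J1 \<union> J2 = J then a I1 J1 * b (I - I1) J2 else 0)
        = (\<Sum>J2\<in>Pow J. if J1 \<union> J2 = J \<and> (\<exists>l\<in>S. J2 = {l}) then a I1 J1 else 0)"
      using True by (intro sum.cong) (auto simp: bdef)
    also have "\<dots> = (\<Sum>J2\<in>{J2\<in>Pow J. J1 \<union> J2 = J \<and> (\<exists>l\<in>S. J2 = {l})}. a I1 J1)"
      by (rule sum.inter_filter[symmetric]) (use fin in auto)
    also have "{J2\<in>Pow J. J1 \<union> J2 = J \<and> (\<exists>l\<in>S. J2 = {l})} = (\<lambda>l. {l}) ` {l\<in>S. l \<in> J \<and> J1 \<union> {l} = J}"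
      by auto
    also have "(\<Sum>J2\<in>(\<lambda>l. {l}) ` {l\<in>S. l \<in> J \<and> J1 \<union> {l} = J}. a I1 J1) = real (card {l\<in>S. l \<in> J \<and> J1 \<union> {l} = J}) * a I1 J1"
      by (simp add: card_image inj_on_def)
    finally show ?thesis using True by simp
  qed
  have "zmul a b I J = (\<Sum>I1\<in>Pow I. \<Sum>J1\<in>Pow J.
          if I - I1 = {j} then real (card {l\<in>S. l \<in> J \<and> J1 \<union> {l} = J}) * a I1 J1 else 0)"
    unfolding zmul_def by (intro sum.cong refl) (simp add: A)
  also have "\<dots> = (\<Sum>I1\<in>Pow I. if j \<in> I then (if I - {j} = I1 then (\<Sum>J1\<in>Pow J.
          real (card {l\<in>S. l \<in> J \<and> J1 \<union> {l} = J}) * a I1 J1) else 0) else 0)"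
  proof (intro sum.cong refl)
    fix I1 assume "I1 \<in> Pow I"
    then have cond: "(I - I1 = {j}) = (j \<in> I \<and> I - {j} = I1)" by blast
    show "(\<Sum>J1\<in>Pow J. if I - I1 = {j} then real (card {l\<in>S. l \<in> J \<and> J1 \<union> {l} = J}) * a I1 J1 else 0)
       = (if j \<in> I then (if I - {j} = I1 then (\<Sum>J1\<in>Pow J.
          real (card {l\<in>S. l \<in> J \<and> J1 \<union> {l} = J}) * a I1 J1) else 0) else 0)"
      unfolding cond by auto
  qed
  also have "\<dots> = (if j \<in> I then (\<Sum>J1\<in>Pow J.
           real (card {l\<in>S. l \<in> J \<and> J1 \<union> {l} = J}) * a (I - {j}) J1) else 0)"
    using fin by (simp add: sum.delta)
  finally show ?thesis .
qed

lemma nilp_coef: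
  "nilp_adj m e t j I J = (if I = {j} \<and> (\<exists>l\<in>{l\<in>{1..m}. t \<in> e l \<and> j \<in> e l}. J = {l}) then 1 else 0)"
proof (cases "finite I \<and> finite J")
  case False
  then have "\<not> finite (Pow I) \<or> \<not> finite (Pow J)" by auto
  then show ?thesis using False unfolding nilp_adj_def zmul_def by auto
next
  case True
  let ?S = "{l\<in>{1..m}. t \<in> e l \<and> j \<in> e l}"
  have "nilp_adj m e t j I J = (if j \<in> I then zsum eps ?S (I - {j}) J else 0)"
    unfolding nilp_adj_def zeta_def using True by (simp add: zmul_zeta_left)
  also have "zsum eps ?S (I - {j}) J = (if I - {j} = {} \<and> (\<exists>l\<in>?S. J = {l}) then 1 else 0)"
  proof (cases "I - {j} = {} \<and> (\<exists>l\<in>?S. J = {l})")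
    case True
    then obtain l0 where l0: "l0 \<in> ?S" "J = {l0}" "I - {j} = {}" by blast
    have "zsum eps ?S (I - {j}) J = (\<Sum>l\<in>?S. if l0 = l then 1 else 0)"
      unfolding zsum_def eps_def zbasis_def using l0 by (intro sum.cong refl) auto
    also have "\<dots> = 1" using l0 by (simp add: sum.delta)
    finally have z: "zsum eps ?S (I - {j}) J = 1" .
    show ?thesis by (rule trans[OF z], rule sym, rule if_P[OF True])
  next
    case False
    then show ?thesis unfolding zsum_def eps_def zbasis_def by (auto intro!: sum.neutral split: if_splits)
  qed
  finally show ?thesis by auto
qed

definition Wset :: "nat \<Rightarrow> nat \<Rightarrow> (nat \<Rightarrow> nat set) \<Rightarrow> nat \<Rightarrow> nat \<Rightarrow> nat \<Rightarrow> nat set \<Rightarrow> nat set \<Rightarrow> (nat list \<times> nat list) set" where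
  "Wset n m e k i j I J = {(us, fs). is_walk n m e k us fs \<and> us ! 0 = i \<and> us ! k = j \<and>
      distinct (tl us) \<and> set (tl us) = I \<and> set fs = J}"

lemma Wset_finite: "finite (Wset n m e k i j I J)"
proof -
  have "Wset n m e k i j I J \<subseteq> {us. set us \<subseteq> {1..n} \<and> length us = k + 1} \<times> {fs. set fs \<subseteq> {1..m} \<and> length fs = k}"
    unfolding Wset_def is_walk_def by auto
  moreover have "finite ({us. set us \<subseteq> {1..n} \<and> length us = k + 1} \<times> {fs. set fs \<subseteq> {1..m} \<and> length fs = k})"
    by (intro finite_cartesian_product finite_lists_length_eq) auto
  ultimately show ?thesis by (rule finite_subset)
qed

lemma Wset_0:
  assumes "i \<in> {1..n}"
  shows "Wset n m e 0 i j I J = (if i = j \<and> I = {} \<and> J = {} then {([i], [])} else {})"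
proof -
  have "(us, fs) \<in> Wset n m e 0 i j I J \<longleftrightarrow> (i = j \<and> I = {} \<and> J = {} \<and> us = [i] \<and> fs = [])" for us fs
  proof
    assume "(us, fs) \<in> Wset n m e 0 i j I J"
    then show "i = j \<and> I = {} \<and> J = {} \<and> us = [i] \<and> fs = []"
      unfolding Wset_def is_walk_def by (cases us) auto
  next
    assume "i = j \<and> I = {} \<and> J = {} \<and> us = [i] \<and> fs = []"
    then show "(us, fs) \<in> Wset n m e 0 i j I J"
      unfolding Wset_def is_walk_def using assms by auto
  qed
  then show ?thesis by auto
qed


lemma Wset_mem:
  "(us, fs) \<in> Wset n m e k i j I J \<longleftrightarrow> length us = k + 1 \<and> length fs = k \<and>
     set us \<subseteq> {1..n} \<and> set fs \<subseteq> {1..m} \<and>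
     (\<forall>t<k. us ! t \<in> e (fs ! t) \<and> us ! (t+1) \<in> e (fs ! t)) \<and>
     us ! 0 = i \<and> us ! k = j \<and> distinct (tl us) \<and> set (tl us) = I \<and> set fs = J"
  unfolding Wset_def is_walk_def by blast

lemma walk_cond_snoc:
  assumes "length us' = Suc k" "length fs' = k"
  shows "(\<forall>t<Suc k. (us'@[x]) ! t \<in> e ((fs'@[l]) ! t) \<and> (us'@[x]) ! (t+1) \<in> e ((fs'@[l]) ! t))
     \<longleftrightarrow> (\<forall>t<k. us' ! t \<in> e (fs' ! t) \<and> us' ! (t+1) \<in> e (fs' ! t)) \<and> us' ! k \<in> e l \<and> x \<in> e l"
proof -
  have a: "(\<forall>t<Suc k. P t) \<longleftrightarrow> (\<forall>t<k. P t) \<and> P k" for P by (auto simp: less_Suc_eq)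
  have b: "(\<forall>t<k. (us'@[x]) ! t \<in> e ((fs'@[l]) ! t) \<and> (us'@[x]) ! (t+1) \<in> e ((fs'@[l]) ! t))
       \<longleftrightarrow> (\<forall>t<k. us' ! t \<in> e (fs' ! t) \<and> us' ! (t+1) \<in> e (fs' ! t))"
    using assms by (simp add: nth_append)
  show ?thesis unfolding a b using assms by (simp add: nth_append)
qed

lemma Wset_snoc:
  assumes "j \<in> {1..n}" "j \<in> I" "length us' = Suc k"
  shows "(us'@[x], fs'@[l]) \<in> Wset n m e (Suc k) i j I J \<longleftrightarrow>
     x = j \<and> (us', fs') \<in> Wset n m e k i (us'!k) (I - {j}) (set fs') \<and> l \<in> {1..m} \<and>
     us'!k \<in> e l \<and> j \<in> e l \<and> insert l (set fs') = J"
proof (cases "length fs' = k")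
  case False
  then show ?thesis unfolding Wset_def is_walk_def by auto
next
  case True
  have ne: "us' \<noteq> []" using assms(3) by auto
  have tl: "tl (us'@[x]) = tl us' @ [x]" using ne by simp
  have x: "(us'@[x]) ! Suc k = x" using assms(3) by (simp add: nth_append)
  have k: "(us'@[x]) ! k = us' ! k" using assms(3) by (simp add: nth_append)
  have z: "(us'@[x]) ! 0 = us' ! 0" using ne by (simp add: nth_append)
  have hd: "us' ! 0 \<in> set us'" using ne by simp
  have "us' ! k \<in> set us'" using assms(3) by simp
  have W: "(\<forall>t<Suc k. (us'@[x]) ! t \<in> e ((fs'@[l]) ! t) \<and> (us'@[x]) ! (t+1) \<in> e ((fs'@[l]) ! t))
     \<longleftrightarrow> (\<forall>t<k. us' ! t \<in> e (fs' ! t) \<and> us' ! (t+1) \<in> e (fs' ! t)) \<and> us' ! k \<in> e l \<and> x \<in> e l"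
    by (rule walk_cond_snoc[OF assms(3) True])
  show ?thesis
    unfolding Wset_mem
    unfolding W
    unfolding tl x k z
    using assms True by auto
qed


lemma Wset_Suc_card:
  assumes j: "j \<in> {1..n}" and fJ: "finite J"
  shows "real (card (Wset n m e (Suc k) i j I J)) = (if j \<in> I then (\<Sum>t\<in>{1..n}. \<Sum>J1\<in>Pow J.
     real (card {l\<in>{l\<in>{1..m}. t \<in> e l \<and> j \<in> e l}. l \<in> J \<and> J1 \<union> {l} = J}) *
     real (card (Wset n m e k i t (I - {j}) J1))) else 0)"
proof (cases "j \<in> I")
  case False
  have "Wset n m e (Suc k) i j I J = {}"
  proof (rule ccontr)
    assume "Wset n m e (Suc k) i j I J \<noteq> {}"
    then obtain us fs where u: "(us, fs) \<in> Wset n m e (Suc k) i j I J" by auto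
    then have "length us = Suc k + 1" "us ! Suc k = j" "set (tl us) = I" unfolding Wset_mem by auto
    then have "tl us ! k = j" by (simp add: nth_tl)
    moreover have "k < length (tl us)" using \<open>length us = Suc k + 1\<close> by simp
    ultimately have "j \<in> set (tl us)" by (metis nth_mem)
    then show False using False \<open>set (tl us) = I\<close> by simp
  qed
  then show ?thesis using False by simp
next
  case True
  define L where "L t J1 = {l\<in>{l\<in>{1..m}. t \<in> e l \<and> j \<in> e l}. l \<in> J \<and> J1 \<union> {l} = J}" for t J1
  define T where "T = (SIGMA t:{1..n}. SIGMA J1:Pow J. L t J1 \<times> Wset n m e k i t (I - {j}) J1)"
  define f where "f = (\<lambda>(us::nat list, fs::nat list). (butlast us ! k, set (butlast fs), last fs, butlast us, butlast fs))"
  define g where "g = (\<lambda>(t::nat, J1::nat set, l::nat, us::nat list, fs::nat list). (us @ [j], fs @ [l]))"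
  have fwd: "f p \<in> T \<and> g (f p) = p" if p: "p \<in> Wset n m e (Suc k) i j I J" for p
  proof -
    obtain us fs where pe: "p = (us, fs)" by (cases p)
    have pw: "(us, fs) \<in> Wset n m e (Suc k) i j I J" using p pe by simp
    have lens: "length us = Suc k + 1" "length fs = Suc k" using pw unfolding Wset_mem by auto
    define us' where "us' = butlast us"
    define fs' where "fs' = butlast fs"
    have "us \<noteq> []" "fs \<noteq> []" using lens by auto
    then have use: "us = us' @ [last us]" and fse: "fs = fs' @ [last fs]"
      unfolding us'_def fs'_def by simp_all
    have lu: "length us' = Suc k" unfolding us'_def using lens by simp
    have mem: "(us' @ [last us], fs' @ [last fs]) \<in> Wset n m e (Suc k) i j I J"
      using p pe use fse by simp
    note M = mem[unfolded Wset_snoc[OF j True lu]]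
    have un: "us' ! k \<in> {1..n}" using M lu unfolding Wset_mem by (metis lessI nth_mem subsetD)
    have "f p = (us' ! k, set fs', last fs, us', fs')" unfolding f_def pe us'_def fs'_def by simp
    moreover have "(us' ! k, set fs', last fs, us', fs') \<in> T"
      unfolding T_def L_def using M un by auto
    moreover have "g (us' ! k, set fs', last fs, us', fs') = p"
      unfolding g_def pe using use fse M by simp
    ultimately show ?thesis by simp
  qed
  have bwd: "g q \<in> Wset n m e (Suc k) i j I J \<and> f (g q) = q" if q: "q \<in> T" for q
  proof -
    obtain t J1 l us' fs' where qe: "q = (t, J1, l, us', fs')" by (cases q) auto
    have qq: "t \<in> {1..n}" "J1 \<subseteq> J" "l \<in> L t J1" "(us', fs') \<in> Wset n m e k i t (I - {j}) J1"
      using q qe unfolding T_def by auto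
    have lu: "length us' = Suc k" "us' ! k = t" "set fs' = J1" using qq(4) unfolding Wset_mem by auto
    have "(us' @ [j], fs' @ [l]) \<in> Wset n m e (Suc k) i j I J"
      unfolding Wset_snoc[OF j True lu(1)] using qq lu unfolding L_def by auto
    moreover have "f (g q) = q" unfolding f_def g_def qe using lu by simp
    ultimately show ?thesis unfolding g_def qe by simp
  qed
  have "bij_betw f (Wset n m e (Suc k) i j I J) T"
    by (rule bij_betw_byWitness[where f'=g]) (use fwd bwd in auto)
  then have "card (Wset n m e (Suc k) i j I J) = card T" by (rule bij_betw_same_card)
  also have "card T = (\<Sum>t\<in>{1..n}. \<Sum>J1\<in>Pow J. card (L t J1) * card (Wset n m e k i t (I - {j}) J1))"
    unfolding T_def using fJ
    by (simp add: card_SigmaI Wset_finite L_def card_cartesian_product finite_SigmaI)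
  finally show ?thesis using True unfolding L_def by simp
qed


lemma mpow_walk:
  assumes i: "i \<in> {1..n}"
  shows "j \<in> {1..n} \<Longrightarrow> mpow n (nilp_adj m e) k i j I J = real (card (Wset n m e k i j I J))"
proof (induction k arbitrary: j I J)
  case 0
  show ?case using Wset_0[OF i] by (simp add: mid_def zone_def zbasis_def zzero_def)
next
  case (Suc k)
  have "mpow n (nilp_adj m e) (Suc k) i j I J = (\<Sum>t\<in>{1..n}. zmul (mpow n (nilp_adj m e) k i t) (nilp_adj m e t j) I J)"
    by (simp add: mmul_def zsum_def)
  show ?case
  proof (cases "finite I \<and> finite J")
    case False
    have "Wset n m e (Suc k) i j I J = {}"
      using False unfolding Wset_mem by (auto simp: Wset_def)
    moreover have "zmul a b I J = 0" for a b
      using False unfolding zmul_def by auto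
    ultimately show ?thesis using \<open>mpow n (nilp_adj m e) (Suc k) i j I J = _\<close> by simp
  next
    case True
    have "mpow n (nilp_adj m e) (Suc k) i j I J = (\<Sum>t\<in>{1..n}. (if j \<in> I then (\<Sum>J1\<in>Pow J.
           real (card {l\<in>{l\<in>{1..m}. t \<in> e l \<and> j \<in> e l}. l \<in> J \<and> J1 \<union> {l} = J}) *
           real (card (Wset n m e k i t (I - {j}) J1))) else 0))"
      unfolding \<open>mpow n (nilp_adj m e) (Suc k) i j I J = _\<close>
    proof (intro sum.cong refl)
      fix t assume t: "t \<in> {1..n}"
      show "zmul (mpow n (nilp_adj m e) k i t) (nilp_adj m e t j) I J = (if j \<in> I then (\<Sum>J1\<in>Pow J.
           real (card {l\<in>{l\<in>{1..m}. t \<in> e l \<and> j \<in> e l}. l \<in> J \<and> J1 \<union> {l} = J}) *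
           real (card (Wset n m e k i t (I - {j}) J1))) else 0)"
        by (subst zmul_right_adj[where S="{l\<in>{1..m}. t \<in> e l \<and> j \<in> e l}" and j=j])
           (use True in \<open>simp_all add: nilp_coef Suc.IH[OF t]\<close>)
    qed
    also have "\<dots> = real (card (Wset n m e (Suc k) i j I J))"
      using Wset_Suc_card[OF Suc.prems] True by auto
    finally show ?thesis .
  qed
qed


lemma path_set_eq:
  assumes "i \<in> I"
  shows "Wset n m e k i j (I - {i}) J = {(us, fs). is_path n m e k i j us fs \<and> set us = I \<and> set fs = J}"
proof -
  have "(us, fs) \<in> Wset n m e k i j (I - {i}) J \<longleftrightarrow> is_path n m e k i j us fs \<and> set us = I \<and> set fs = J" for us fs
  proof (cases us)
    case Nil then show ?thesis unfolding Wset_mem is_path_def is_walk_def by auto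
  next
    case (Cons x xs)
    show ?thesis unfolding Wset_mem is_path_def is_walk_def Cons using assms by auto
  qed
  then show ?thesis by auto
qed

lemma path_set_empty:
  assumes "\<not> (i \<in> I \<and> (I, J) \<in> {I. I \<subseteq> {1..n} \<and> card I = k + 1} \<times> Pow {1..m})"
  shows "{(us, fs). is_path n m e k i j us fs \<and> set us = I \<and> set fs = J} = {}"
proof (rule ccontr)
  assume "\<not> ?thesis"
  then obtain us fs where p: "is_path n m e k i j us fs" "set us = I" "set fs = J" by auto
  then have "length us = k + 1" "distinct us" "set us \<subseteq> {1..n}" "set fs \<subseteq> {1..m}" "us ! 0 = i"
    unfolding is_path_def is_walk_def by auto
  moreover have "card (set us) = k + 1" using calculation distinct_card by metis
  moreover have "i \<in> set us" using calculation by (metis add_gr_0 nth_mem zero_less_one)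
  ultimately show False using assms p by auto
qed

lemma cyc_split:
  assumes "length us = k + 1" "k \<ge> 1" "us ! 0 = i" "us ! k = i"
  shows "\<exists>ys. us = i # ys @ [i] \<and> length ys = k - 1"
proof -
  obtain x xs where u: "us = x # xs" using assms(1) by (cases us) auto
  have x: "x = i" using assms(3) u by simp
  have ne: "xs \<noteq> []" using assms(1,2) u by auto
  have lx: "length xs = k" using assms(1) u by simp
  have "last xs = xs ! (k - 1)" using ne lx by (simp add: last_conv_nth)
  also have "\<dots> = us ! k" using u assms(2) by (cases k) auto
  finally have "last xs = i" using assms(4) by simp
  then have "xs = butlast xs @ [i]" using ne by (metis append_butlast_last_id)
  then show ?thesis using u x lx by (intro exI[of _ "butlast xs"]) auto
qed

lemma cycle_set_eq:
  assumes "k \<ge> 1"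
  shows "Wset n m e k i i I J = {(us, fs). is_cycle n m e k i us fs \<and> set (take k us) = I \<and> set fs = J}"
proof -
  have "(us, fs) \<in> Wset n m e k i i I J \<longleftrightarrow> is_cycle n m e k i us fs \<and> set (take k us) = I \<and> set fs = J" for us fs
  proof (cases "length us = k + 1 \<and> us ! 0 = i \<and> us ! k = i")
    case False
    have "(us, fs) \<notin> Wset n m e k i i I J" using False unfolding Wset_mem by blast
    moreover have "\<not> is_cycle n m e k i us fs" using False unfolding is_cycle_def is_walk_def by blast
    ultimately show ?thesis by simp
  next
    case True
    then have T: "length us = k + 1" "us ! 0 = i" "us ! k = i" by simp_all
    obtain ys where ys: "us = i # ys @ [i]" "length ys = k - 1" using cyc_split[OF T(1) assms T(2,3)] by blast
    have tk: "take k us = i # ys" using ys assms by (cases k) auto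
    have tl: "tl us = ys @ [i]" using ys by simp
    have d: "distinct (ys @ [i]) = distinct (i # ys)" by auto
    have st: "set (ys @ [i]) = set (i # ys)" by auto
    show ?thesis unfolding Wset_mem is_cycle_def is_walk_def tk tl d st using True by blast
  qed
  then show ?thesis by auto
qed

lemma cycle_set_empty:
  assumes "\<not> ((I, J) \<in> {I. I \<subseteq> {1..n} \<and> card I = k} \<times> Pow {1..m})"
  shows "{(us, fs). is_cycle n m e k i us fs \<and> set (take k us) = I \<and> set fs = J} = {}"
proof (rule ccontr)
  assume "\<not> ?thesis"
  then obtain us fs where p: "is_cycle n m e k i us fs" "set (take k us) = I" "set fs = J" by auto
  then have "length us = k + 1" "distinct (take k us)" "set us \<subseteq> {1..n}" "set fs \<subseteq> {1..m}"
    unfolding is_cycle_def is_walk_def by auto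
  moreover have "card (set (take k us)) = k"
  proof -
    have "card (set (take k us)) = length (take k us)" using \<open>distinct (take k us)\<close> by (rule distinct_card)
    then show ?thesis using \<open>length us = k + 1\<close> by simp
  qed
  moreover have "set (take k us) \<subseteq> set us" by (rule set_take_subset)
  ultimately have "I \<subseteq> {1..n}" "card I = k" "J \<subseteq> {1..m}" using p(2,3) by (blast, simp, blast)
  then show False using assms by blast
qed

theorem mainTheorem1:
  fixes n m k :: nat and e :: "nat \<Rightarrow> nat set"
  assumes H: "hypergraph n m e"
    and k: "k \<ge> 1"
  shows "(\<forall>i\<in>{1..n}. \<forall>j\<in>{1..n}. i \<noteq> j \<longrightarrow>
            zmul (zeta i) (mpow n (nilp_adj m e) k i j) =
            zsum (\<lambda>(I, J). zscal (real (path_count n m e k i j I J)) (zbasis I J))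
                 ({I. I \<subseteq> {1..n} \<and> card I = k + 1} \<times> Pow {1..m}))
       \<and> (k \<ge> 2 \<longrightarrow> (\<forall>i\<in>{1..n}.
            mpow n (nilp_adj m e) k i i =
            zsum (\<lambda>(I, J). zscal (real (cycle_count n m e k i I J)) (zbasis I J))
                 ({I. I \<subseteq> {1..n} \<and> card I = k} \<times> Pow {1..m})))"
proof (intro conjI ballI impI)
  fix i j assume i: "i \<in> {1..n}" and j: "j \<in> {1..n}" and ij: "i \<noteq> j"
  let ?A = "{I. I \<subseteq> {1..n} \<and> card I = k + 1} \<times> Pow {1..m}"
  have finA: "finite ?A" by (rule finite_cartesian_product) (auto intro: finite_subset[of _ "Pow {1..n}"])
  show "zmul (zeta i) (mpow n (nilp_adj m e) k i j) =
            zsum (\<lambda>(I, J). zscal (real (path_count n m e k i j I J)) (zbasis I J)) ?A"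
  proof (intro ext)
    fix I J
    let ?P = "{(us, fs). is_path n m e k i j us fs \<and> set us = I \<and> set fs = J}"
    have R: "zsum (\<lambda>(I, J). zscal (real (path_count n m e k i j I J)) (zbasis I J)) ?A I J
        = (if (I, J) \<in> ?A then real (card ?P) else 0)"
      by (subst zsum_basis_coef[OF finA]) (simp add: path_count_def)
    show "zmul (zeta i) (mpow n (nilp_adj m e) k i j) I J =
        zsum (\<lambda>(I, J). zscal (real (path_count n m e k i j I J)) (zbasis I J)) ?A I J"
    proof (cases "i \<in> I \<and> (I, J) \<in> ?A")
      case True
      then have fin: "finite I" "finite J" by (auto intro: finite_subset)
      show ?thesis unfolding R zeta_def zmul_zeta_left[OF fin] mpow_walk[OF i j]
        using True path_set_eq[of i I n m e k j J] by simp
    next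
      case False
      then have P0: "?P = {}" by (rule path_set_empty)
      have L: "zmul (zeta i) (mpow n (nilp_adj m e) k i j) I J = 0"
      proof (cases "finite I \<and> finite J")
        case True
        then have fI: "finite I" and fJ: "finite J" by auto
        show ?thesis
        proof (cases "i \<in> I")
          case True
          then show ?thesis unfolding zeta_def zmul_zeta_left[OF fI fJ] mpow_walk[OF i j]
            using path_set_eq[of i I n m e k j J] P0 by simp
        qed (simp add: zeta_def zmul_zeta_left[OF fI fJ])
      qed (auto simp: zmul_def)
      show ?thesis unfolding R L P0 by simp
    qed
  qed
next
  fix i assume i: "i \<in> {1..n}" and k2: "k \<ge> 2"
  let ?A = "{I. I \<subseteq> {1..n} \<and> card I = k} \<times> Pow {1..m}"
  have finA: "finite ?A" by (rule finite_cartesian_product) (auto intro: finite_subset[of _ "Pow {1..n}"])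
  show "mpow n (nilp_adj m e) k i i =
            zsum (\<lambda>(I, J). zscal (real (cycle_count n m e k i I J)) (zbasis I J)) ?A"
  proof (intro ext)
    fix I J
    let ?C = "{(us, fs). is_cycle n m e k i us fs \<and> set (take k us) = I \<and> set fs = J}"
    have R: "zsum (\<lambda>(I, J). zscal (real (cycle_count n m e k i I J)) (zbasis I J)) ?A I J
        = (if (I, J) \<in> ?A then real (card ?C) else 0)"
      by (subst zsum_basis_coef[OF finA]) (simp add: cycle_count_def)
    show "mpow n (nilp_adj m e) k i i I J =
        zsum (\<lambda>(I, J). zscal (real (cycle_count n m e k i I J)) (zbasis I J)) ?A I J"
    proof (cases "(I, J) \<in> ?A")
      case True
      then show ?thesis unfolding R mpow_walk[OF i i] cycle_set_eq[OF k] by simp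
    next
      case False
      show ?thesis unfolding R mpow_walk[OF i i] cycle_set_eq[OF k] cycle_set_empty[OF False]
        using False by simp
    qed
  qed
qed

end
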